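(* Let $q$ be a prime power with $q\equiv 3\pmod 4$ and $q=2m+1$. Let $a,b\in D_1^2$ with $ab=1$, and let $M=\begin{pmatrix}1&a\\ b&1\end{pmatrix}$. Then the $2\times 2$ block matrix whose $(i,j)$ block is $C_{M_{ij}}$ (that is, $\begin{pmatrix}C_1&C_a\\ C_b&C_1\end{pmatrix}$) is the adjacency matrix of a directed strongly regular graph with parameters $(2(2m+1),\ 2m,\ m,\ m-1,\ m)$.
   Context: Fix a primitive element $\gamma$ of $\mathbb{F}_q$; $D_i^e=\gamma^i\langle\gamma^e\rangle$ ($e\mid q-1$) are the cyclotomic classes, here with $e=2$ ($D_1^2$ = quadratic nonresidues). For $\sigma\in\mathbb{F}_q^*$, $C_\sigma$ is the $q\times q$ $0$-$1$ matrix with rows and columns indexed by $\mathbb{F}_q$ and $(C_\sigma)_{x,y}=1$ iff $x\in\sigma y+D_0^e$. A directed strongly regular graph with parameters $(v,k,t,\lambda,\mu)$ is a digraph (no loops, no multiple arcs) on $v$ vertices whose adjacency matrix $A$ satisfies $A^2=tI+\lambda A+\mu(J-I-A)$ and $AJ=JA=kJ$. *)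

theory Defs
  imports Main
begin

text \<open>Finite field F_q is modelled as a type 'a :: {finite, field}; q = CARD('a).\<close>

definition primitive_elem :: "'a::{finite,field} \<Rightarrow> bool" where
  "primitive_elem g \<longleftrightarrow> {g ^ k | k. True} = UNIV - {0}"

text \<open>Cyclotomic class D_i^e = gamma^i <gamma^e>.\<close>
definition cyc_class :: "'a::{finite,field} \<Rightarrow> nat \<Rightarrow> nat \<Rightarrow> 'a set" where
  "cyc_class g e i = {g ^ i * (g ^ e) ^ k | k. True}"

definition Cmat :: "'a::{finite,field} \<Rightarrow> nat \<Rightarrow> 'a \<Rightarrow> 'a \<Rightarrow> 'a \<Rightarrow> int" where
  "Cmat g e \<sigma> x y = (if x - \<sigma> * y \<in> cyc_class g e 0 then 1 else 0)"

text \<open>Block matrix with (i,j) block C_{M i j}; block index False = first, True = second.\<close>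
definition block_Cmat :: "'a::{finite,field} \<Rightarrow> nat \<Rightarrow> (bool \<Rightarrow> bool \<Rightarrow> 'a)
    \<Rightarrow> bool \<times> 'a \<Rightarrow> bool \<times> 'a \<Rightarrow> int" where
  "block_Cmat g e M u w = Cmat g e (M (fst u) (fst w)) (snd u) (snd w)"

definition is_dsrg :: "('v::finite \<Rightarrow> 'v \<Rightarrow> int) \<Rightarrow> nat \<Rightarrow> nat \<Rightarrow> nat \<Rightarrow> nat \<Rightarrow> nat \<Rightarrow> bool" where
  "is_dsrg A v k t lam mu \<longleftrightarrow>
     card (UNIV :: 'v set) = v \<and>
     (\<forall>x y. A x y \<in> {0, 1}) \<and>
     (\<forall>x. A x x = 0) \<and>
     (\<forall>x y. (\<Sum>z\<in>UNIV. A x z * A z y) =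
        int t * (if x = y then 1 else 0) + int lam * A x y
        + int mu * (1 - (if x = y then 1 else 0) - A x y)) \<and>
     (\<forall>x. (\<Sum>y\<in>UNIV. A x y) = int k) \<and>
     (\<forall>y. (\<Sum>x\<in>UNIV. A x y) = int k)"

end

theory Submission
  imports Defs
begin

definition ind :: "bool \<Rightarrow> int" where "ind P = (if P then 1 else 0)"

lemma cyc0: "cyc_class g 2 0 = {g ^ (2*k) | k. True}"
  unfolding cyc_class_def by (intro Collect_cong ex_cong1) (simp add: power_mult)
lemma cyc1: "cyc_class g 2 1 = {g ^ (2*k+1) | k. True}"
proof -
  have "\<And>k. g^1 * (g^2)^k = g^(2*k+1)"
    by (metis power_add power_mult add.commute)
  then show ?thesis unfolding cyc_class_def by (simp only:)
qed

lemma prim_nz: "primitive_elem g \<Longrightarrow> g \<noteq> 0"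
  unfolding primitive_elem_def
  by (metis (mono_tags, lifting) Diff_iff insertI1 mem_Collect_eq power_one_right)

lemma prim_all: "primitive_elem g \<Longrightarrow> x \<noteq> 0 \<Longrightarrow> \<exists>n. x = g ^ n"
proof -
  assume "primitive_elem g" "x \<noteq> 0"
  then have "x \<in> {g ^ k | k. True}" unfolding primitive_elem_def by auto
  then show ?thesis by auto
qed

lemma SN_cover: "primitive_elem g \<Longrightarrow> x \<noteq> 0 \<Longrightarrow> x \<in> cyc_class g 2 0 \<or> x \<in> cyc_class g 2 1"
proof -
  assume a: "primitive_elem g" "x \<noteq> 0"
  then obtain n where n: "x = g ^ n" using prim_all by blast
  show ?thesis
  proof (cases "even n")
    case True then obtain k where "n = 2*k" by blast
    then show ?thesis unfolding cyc0 using n by blast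
  next
    case False then obtain k where "n = 2*k+1" using oddE by blast
    then show ?thesis unfolding cyc1 using n by blast
  qed
qed

lemma zero_notin: "primitive_elem g \<Longrightarrow> 0 \<notin> cyc_class g 2 0 \<and> 0 \<notin> cyc_class g 2 1"
  using prim_nz unfolding cyc0 cyc1 by auto

lemma mult_SS: "x \<in> cyc_class g 2 0 \<Longrightarrow> y \<in> cyc_class g 2 0 \<Longrightarrow> x*y \<in> cyc_class g 2 0"
  unfolding cyc0 by (auto simp: power_add[symmetric]) (metis add_mult_distrib2)
lemma mult_SN: "x \<in> cyc_class g 2 0 \<Longrightarrow> y \<in> cyc_class g 2 1 \<Longrightarrow> x*y \<in> cyc_class g 2 1"
  unfolding cyc0 cyc1 by (auto simp: power_add[symmetric]) (metis add.assoc add_mult_distrib2)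
lemma mult_NN: "x \<in> cyc_class g 2 1 \<Longrightarrow> y \<in> cyc_class g 2 1 \<Longrightarrow> x*y \<in> cyc_class g 2 0"
proof -
  assume "x \<in> cyc_class g 2 1" "y \<in> cyc_class g 2 1"
  then obtain i j where "x = g^(2*i+1)" "y = g^(2*j+1)" unfolding cyc1 by auto
  then have "x*y = g^(2*(i+j+1))" by (simp add: power_add[symmetric])
  then show ?thesis unfolding cyc0 by blast
qed

lemma char_ne2:
  assumes "card (UNIV :: 'a::{finite,field} set) = 2*m+1"
  shows "(1::'a) + 1 \<noteq> 0"
proof
  assume h: "(1::'a) + 1 = 0"
  have "(\<Sum>x\<in>UNIV. x + 1) = (\<Sum>x\<in>(UNIV::'a set). x)"
    by (rule sum.reindex_bij_betw, rule bij_betw_byWitness[where f'="\<lambda>x. x - 1"]) auto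
  then have "of_nat (card (UNIV::'a set)) = (0::'a)" by (simp add: sum.distrib)
  then have "2 * of_nat m + 1 = (0::'a)" using assms by (simp add: add.commute)
  moreover have "(2::'a) = 0" using h by simp
  ultimately show False by simp
qed

lemma odd_pow_one:
  assumes g: "g \<noteq> (0::'a::field)" and e: "g^(2*i) = g^(2*j+1)"
  shows "\<exists>d. odd d \<and> g^d = 1"
proof (cases "2*i > 2*j+1")
  case True
  have "2*i = (2*j+1) + (2*i-(2*j+1))" using True by simp
  then have "g^(2*i) = g^(2*j+1) * g^(2*i-(2*j+1))" by (metis power_add)
  then have "g^(2*j+1) * g^(2*i-(2*j+1)) = g^(2*j+1) * 1" using e by simp
  then have "g^(2*i-(2*j+1)) = 1" using g by simp
  moreover have "odd (2*i-(2*j+1))" using True by presburger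
  ultimately show ?thesis by blast
next
  case False
  then have F: "2*i < 2*j+1" by presburger
  have "2*j+1 = 2*i + (2*j+1-2*i)" using F by simp
  then have "g^(2*j+1) = g^(2*i) * g^(2*j+1-2*i)" by (metis power_add)
  then have "g^(2*i) * g^(2*j+1-2*i) = g^(2*i) * 1" using e by simp
  then have "g^(2*j+1-2*i) = 1" using g by simp
  moreover have "odd (2*j+1-2*i)" using F by presburger
  ultimately show ?thesis by blast
qed

lemma SN_disj:
  fixes g :: "'a::{finite,field}"
  assumes p: "primitive_elem g" and c: "card (UNIV :: 'a set) = 2*m+1"
  shows "cyc_class g 2 0 \<inter> cyc_class g 2 1 = {}"
proof (rule ccontr)
  assume "cyc_class g 2 0 \<inter> cyc_class g 2 1 \<noteq> {}"
  then obtain i j where e: "g^(2*i) = g^(2*j+1)" unfolding cyc0 cyc1 by auto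
  have g0: "g \<noteq> 0" using prim_nz p .
  obtain d where d: "odd d" "g^d = 1" using odd_pow_one[OF g0 e] by blast
  define h where "h = g^((d+1) div 2)"
  have "g = g^(d+1)" using d by simp
  also have "d + 1 = 2 * ((d+1) div 2)" using d by presburger
  finally have gh: "g = h^2" unfolding h_def by (simp add: power_mult[symmetric] mult.commute)
  let ?A = "UNIV - {0::'a}"
  have "?A \<subseteq> (\<lambda>y. y*y) ` ?A"
  proof
    fix x assume "x \<in> ?A"
    then obtain n where n: "x = g^n" using prim_all[OF p] by blast
    have "x = (h^n) * (h^n)" using n gh by (simp add: power_mult[symmetric] power_mult_distrib[symmetric] power2_eq_square mult.commute)
    moreover have "h^n \<noteq> 0" using g0 gh by auto
    ultimately show "x \<in> (\<lambda>y. y*y) ` ?A" by blast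
  qed
  then have "inj_on (\<lambda>y. y*y) ?A" by (intro finite_surj_inj) auto
  moreover have "(1::'a) \<in> ?A" "(-1::'a) \<in> ?A" by auto
  moreover have "(1::'a) \<noteq> -1" using char_ne2[OF c] by (metis add_eq_0_iff)
  ultimately show False unfolding inj_on_def by (metis mult_minus1 minus_minus mult_1)
qed

lemma card_S:
  fixes g :: "'a::{finite,field}"
  assumes p: "primitive_elem g" and c: "card (UNIV :: 'a set) = 2*m+1"
  shows "card (cyc_class g 2 0) = m"
proof -
  have g0: "g \<noteq> 0" using prim_nz p .
  have "(\<lambda>x. g*x) ` cyc_class g 2 0 = cyc_class g 2 1"
    unfolding cyc0 cyc1 by (auto simp: image_iff)
  moreover have "inj_on (\<lambda>x. g*x) (cyc_class g 2 0)" using g0 by (auto simp: inj_on_def)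
  ultimately have eq: "card (cyc_class g 2 1) = card (cyc_class g 2 0)" by (metis card_image)
  have "cyc_class g 2 0 \<union> cyc_class g 2 1 = UNIV - {0}"
    using SN_cover[OF p] zero_notin[OF p] by blast
  then have "card (cyc_class g 2 0) + card (cyc_class g 2 1) = card (UNIV - {0::'a})"
    using SN_disj[OF p c] by (metis card_Un_disjoint finite)
  also have "\<dots> = 2*m" using c by (simp add: card_Diff_singleton)
  finally show ?thesis using eq by simp
qed

lemma one_S: "1 \<in> cyc_class g 2 0" unfolding cyc0 by (metis (mono_tags) mem_Collect_eq mult_0_right power_0)

lemma N_mult:
  fixes g :: "'a::{finite,field}"
  assumes p: "primitive_elem g" and c: "card (UNIV :: 'a set) = 2*m+1"
    and n: "n \<in> cyc_class g 2 1"
  shows "(n*u \<in> cyc_class g 2 0) = (u \<in> cyc_class g 2 1)"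
proof
  assume "u \<in> cyc_class g 2 1" then show "n*u \<in> cyc_class g 2 0" using mult_NN n by blast
next
  assume h: "n*u \<in> cyc_class g 2 0"
  have "u \<noteq> 0" using h zero_notin[OF p] by auto
  moreover have "u \<notin> cyc_class g 2 0"
  proof
    assume "u \<in> cyc_class g 2 0"
    then have "n*u \<in> cyc_class g 2 1" using mult_SN n by (metis mult.commute)
    then show False using h SN_disj[OF p c] by blast
  qed
  ultimately show "u \<in> cyc_class g 2 1" using SN_cover[OF p] by blast
qed

lemma N_inv:
  fixes g :: "'a::{finite,field}"
  assumes p: "primitive_elem g" and c: "card (UNIV :: 'a set) = 2*m+1"
    and n: "n \<in> cyc_class g 2 1"
  shows "inverse n \<in> cyc_class g 2 1"
proof -
  have "n \<noteq> 0" using n zero_notin[OF p] by auto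
  then have "n * inverse n \<in> cyc_class g 2 0" using one_S by simp
  then show ?thesis using N_mult[OF p c n] by blast
qed

lemma sum_ind_bij:
  fixes f :: "'a::finite \<Rightarrow> 'a"
  assumes "bij f"
  shows "(\<Sum>z\<in>UNIV. ind (f z \<in> A)) = int (card A)"
proof -
  have "(\<Sum>z\<in>UNIV. ind (f z \<in> A)) = (\<Sum>w\<in>UNIV. ind (w \<in> A))"
    by (rule sum.reindex_bij_betw[OF assms])
  also have "\<dots> = (\<Sum>w\<in>UNIV. of_bool (w \<in> A))" unfolding ind_def by (intro sum.cong) auto
  also have "\<dots> = int (card A)" by simp
  finally show ?thesis .
qed

lemma sum_C:
  fixes \<sigma> :: "'a::{finite,field}"
  assumes "\<sigma> \<noteq> 0"
  shows "(\<Sum>z\<in>UNIV. ind (x - \<sigma>*z \<in> S) * ind (z - \<tau>*y \<in> S))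
       = (\<Sum>w\<in>UNIV. ind (x - w \<in> S) * ind (inverse \<sigma> * (w - \<sigma>*\<tau>*y) \<in> S))"
proof -
  have b: "bij (\<lambda>z. \<sigma>*z)"
    by (rule bij_betw_byWitness[where f'="\<lambda>w. inverse \<sigma> * w"]) (use assms in auto)
  have "(\<Sum>w\<in>UNIV. ind (x - w \<in> S) * ind (inverse \<sigma> * (w - \<sigma>*\<tau>*y) \<in> S))
      = (\<Sum>z\<in>UNIV. ind (x - \<sigma>*z \<in> S) * ind (inverse \<sigma> * (\<sigma>*z - \<sigma>*\<tau>*y) \<in> S))"
    by (rule sum.reindex_bij_betw[OF b, symmetric])
  also have "\<dots> = (\<Sum>z\<in>UNIV. ind (x - \<sigma>*z \<in> S) * ind (z - \<tau>*y \<in> S))"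
    using assms by (simp add: right_diff_distrib mult.assoc[symmetric])
  finally show ?thesis by simp
qed

lemma pair_sum:
  fixes g :: "'a::{finite,field}"
  assumes p: "primitive_elem g" and c: "card (UNIV :: 'a set) = 2*m+1"
    and s: "\<sigma> \<in> cyc_class g 2 1" and st: "\<sigma> * \<tau> = k"
  shows "(\<Sum>z\<in>UNIV. ind (x - z \<in> cyc_class g 2 0) * ind (z - k*y \<in> cyc_class g 2 0))
       + (\<Sum>z\<in>UNIV. ind (x - \<sigma>*z \<in> cyc_class g 2 0) * ind (z - \<tau>*y \<in> cyc_class g 2 0))
       = int m - ind (x - k*y \<in> cyc_class g 2 0)"
proof -
  let ?S = "cyc_class g 2 0" and ?N = "cyc_class g 2 1"
  have s0: "\<sigma> \<noteq> 0" using s zero_notin[OF p] by auto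
  have si: "inverse \<sigma> \<in> ?N" using N_inv[OF p c s] .
  have "(\<Sum>z\<in>UNIV. ind (x - \<sigma>*z \<in> ?S) * ind (z - \<tau>*y \<in> ?S))
     = (\<Sum>w\<in>UNIV. ind (x - w \<in> ?S) * ind (inverse \<sigma> * (w - k*y) \<in> ?S))"
    using sum_C[OF s0] st by simp
  also have "\<dots> = (\<Sum>w\<in>UNIV. ind (x - w \<in> ?S) * ind (w - k*y \<in> ?N))"
    using N_mult[OF p c si] by simp
  finally have e2: "(\<Sum>z\<in>UNIV. ind (x - \<sigma>*z \<in> ?S) * ind (z - \<tau>*y \<in> ?S))
     = (\<Sum>w\<in>UNIV. ind (x - w \<in> ?S) * ind (w - k*y \<in> ?N))" .
  have pt: "ind (w - k*y \<in> ?S) + ind (w - k*y \<in> ?N) = 1 - ind (w = k*y)" for w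
    using SN_cover[OF p, of "w - k*y"] zero_notin[OF p] SN_disj[OF p c]
    unfolding ind_def by auto
  have "(\<Sum>z\<in>UNIV. ind (x - z \<in> ?S) * ind (z - k*y \<in> ?S))
       + (\<Sum>w\<in>UNIV. ind (x - w \<in> ?S) * ind (w - k*y \<in> ?N))
       = (\<Sum>w\<in>UNIV. ind (x - w \<in> ?S) * (1 - ind (w = k*y)))"
    unfolding sum.distrib[symmetric] by (intro sum.cong refl) (simp only: distrib_left[symmetric] pt)
  also have "\<dots> = (\<Sum>w\<in>UNIV. ind (x - w \<in> ?S)) - (\<Sum>w\<in>UNIV. ind (x - w \<in> ?S) * ind (w = k*y))"
    by (simp add: right_diff_distrib sum_subtractf)
  also have "(\<Sum>w\<in>UNIV. ind (x - w \<in> ?S)) = int m"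
  proof -
    have "bij (\<lambda>w. x - w)"
      by (rule bij_betw_byWitness[where f'="\<lambda>w. x - w"]) auto
    then show ?thesis using sum_ind_bij card_S[OF p c] by metis
  qed
  also have "(\<Sum>w\<in>UNIV. ind (x - w \<in> ?S) * ind (w = k*y)) = ind (x - k*y \<in> ?S)"
  proof -
    have "\<And>w. ind (x - w \<in> ?S) * ind (w = k*y) = (if w = k*y then ind (x - k*y \<in> ?S) else 0)"
      by (simp add: ind_def)
    then show ?thesis by simp
  qed
  finally show ?thesis using e2 by simp
qed

lemma sum_split:
  fixes f :: "bool \<times> 'a::finite \<Rightarrow> int"
  shows "(\<Sum>u\<in>UNIV. f u) = (\<Sum>z\<in>UNIV. f (False,z)) + (\<Sum>z\<in>UNIV. f (True,z))"
proof -
  have "(\<Sum>u\<in>UNIV. f u) = (\<Sum>l\<in>UNIV. \<Sum>z\<in>UNIV. f (l,z))"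
    by (simp add: sum.cartesian_product UNIV_Times_UNIV[symmetric] del: UNIV_Times_UNIV)
  then show ?thesis by (simp add: UNIV_bool)
qed

lemma rowc:
  fixes \<sigma> :: "'a::{finite,field}"
  assumes "\<sigma> \<noteq> 0"
  shows "(\<Sum>z\<in>UNIV. ind (x - \<sigma>*z \<in> A)) = int (card A)"
proof -
  have "bij (\<lambda>z. x - \<sigma>*z)"
    by (rule bij_betw_byWitness[where f'="\<lambda>w. inverse \<sigma> * (x - w)"]) (use assms in \<open>auto simp: field_simps\<close>)
  then show ?thesis by (rule sum_ind_bij)
qed

lemma colc:
  fixes c :: "'a::{finite,field}"
  shows "(\<Sum>z\<in>UNIV. ind (z - c \<in> A)) = int (card A)"
proof -
  have "bij (\<lambda>z. z - c)"
    by (rule bij_betw_byWitness[where f'="\<lambda>w. w + c"]) auto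
  then show ?thesis by (rule sum_ind_bij)
qed

theorem mainTheorem8:
  fixes \<gamma> a b :: "'a::{finite,field}" and m :: nat
  assumes "primitive_elem \<gamma>"
    and "card (UNIV :: 'a set) mod 4 = 3"
    and "card (UNIV :: 'a set) = 2 * m + 1"
    and "a \<in> cyc_class \<gamma> 2 1" and "b \<in> cyc_class \<gamma> 2 1"
    and "a * b = 1"
  shows "is_dsrg (block_Cmat \<gamma> 2 (\<lambda>i j. if i = j then 1 else if \<not> i then a else b))
           (2 * (2 * m + 1)) (2 * m) m (m - 1) m"
proof -
  note p = assms(1) and c = assms(3) and aN = assms(4) and bN = assms(5) and ab = assms(6)
  define M where "M = (\<lambda>i j. if i = j then 1 else if \<not> i then a else (b::'a))"
  define S where "S = cyc_class \<gamma> 2 0"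
  have Meq: "(\<lambda>i j. if i = j then 1 else if \<not> i then a else b) = M" by (simp add: M_def)
  have a0: "a \<noteq> 0" using aN zero_notin[OF p] by auto
  have b0: "b \<noteq> 0" using bN zero_notin[OF p] by auto
  have ba: "b * a = 1" using ab by (simp add: mult.commute)
  have M0: "M i j \<noteq> 0" for i j unfolding M_def using a0 b0 by auto
  have m1: "m \<ge> 1" using assms(2,3) by presburger
  have cS: "card S = m" unfolding S_def using card_S[OF p c] .
  have Aeq: "block_Cmat \<gamma> 2 M u w = ind (snd u - M (fst u) (fst w) * snd w \<in> S)" for u w
    unfolding block_Cmat_def Cmat_def ind_def S_def by simp
  have S0: "0 \<notin> S" unfolding S_def using zero_notin[OF p] by auto
  have sq: "(\<Sum>v\<in>UNIV. block_Cmat \<gamma> 2 M (i,x) v * block_Cmat \<gamma> 2 M v (j,y))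
        = int m - ind (x - M i j * y \<in> S)" for i j x y
  proof (cases i; cases j)
    assume "i" "j"
    then show ?thesis using pair_sum[OF p c bN ba, of x y] unfolding S_def[symmetric] sum_split Aeq
      by (simp add: M_def add.commute)
  next
    assume "i" "\<not> j"
    then show ?thesis using pair_sum[OF p c bN, of 1 b x y] unfolding S_def[symmetric] sum_split Aeq
      by (simp add: M_def add.commute)
  next
    assume "\<not> i" "j"
    then show ?thesis using pair_sum[OF p c aN, of 1 a x y] unfolding S_def[symmetric] sum_split Aeq
      by (simp add: M_def)
  next
    assume "\<not> i" "\<not> j"
    then show ?thesis using pair_sum[OF p c aN ab, of x y] unfolding S_def[symmetric] sum_split Aeq
      by (simp add: M_def)
  qed
  show ?thesis
    unfolding is_dsrg_def Meq
  proof (intro conjI allI)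
    show "card (UNIV :: (bool \<times> 'a) set) = 2 * (2 * m + 1)"
      using c by (simp add: UNIV_Times_UNIV[symmetric] card_cartesian_product del: UNIV_Times_UNIV)
  next
    fix u w show "block_Cmat \<gamma> 2 M u w \<in> {0, 1}" unfolding Aeq ind_def by simp
  next
    fix u show "block_Cmat \<gamma> 2 M u u = 0" unfolding Aeq ind_def using S0 by (simp add: M_def)
  next
    fix u w :: "bool \<times> 'a"
    obtain i x where u: "u = (i,x)" by (cases u)
    obtain j y where w: "w = (j,y)" by (cases w)
    show "(\<Sum>z\<in>UNIV. block_Cmat \<gamma> 2 M u z * block_Cmat \<gamma> 2 M z w) =
        int m * (if u = w then 1 else 0) + int (m - 1) * block_Cmat \<gamma> 2 M u w +
        int m * (1 - (if u = w then 1 else 0) - block_Cmat \<gamma> 2 M u w)"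
    proof (cases "u = w")
      case True
      then show ?thesis using sq[of i x j y] u w S0 unfolding Aeq by (simp add: M_def ind_def)
    next
      case False
      then show ?thesis using sq[of i x j y] u w m1 by (simp add: Aeq algebra_simps of_nat_diff)
    qed
  next
    fix u :: "bool \<times> 'a"
    obtain i x where u: "u = (i,x)" by (cases u)
    show "(\<Sum>w\<in>UNIV. block_Cmat \<gamma> 2 M u w) = int (2 * m)"
      using rowc[OF M0, where A=S and x=x] cS unfolding u by (simp add: sum_split Aeq)
  next
    fix w :: "bool \<times> 'a"
    obtain j y where w: "w = (j,y)" by (cases w)
    show "(\<Sum>u\<in>UNIV. block_Cmat \<gamma> 2 M u w) = int (2 * m)"
      using colc[where A=S] cS unfolding w by (simp add: sum_split Aeq)
  qed
qed

end
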